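(* In the reset-button collector, let $s_n:=\phi_n(q_n)=\mathbb Eq_n^{C_n}$. Then $\mathbb ET_n=\dfrac{1-s_n}{\rho_ns_n}$.
   Context: Reset-button collector: fix $n\ge1$. There are standard coupons $1,\dots,n$ and a reset coupon. At each discrete time $t=1,2,\dots$ one coupon is sampled independently: the reset coupon with probability $\rho_n\in(0,1)$, standard coupon $i$ with probability $p_{i,n}>0$, where $\sum_ip_{i,n}=q_n:=1-\rho_n$. Starting from the empty collection, drawn standard coupons are added; a reset empties the collection and collecting continues. $T_n$ is the first time all $n$ standard coupons are present. $C_n$ is the ordinary coupon collector completion time (number of i.i.d. draws until all types seen) with type probabilities $p_{i,n}/q_n$, and $\phi_n(z)=\mathbb Ez^{C_n}$. *)

theory Defs
  imports "HOL-Probability.Probability"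
begin

text \<open>Draw distribution of the reset-button collector: None is the reset coupon
  (probability rho), Some i is standard coupon i (probability p i), for i in {1..n}.\<close>
definition reset_draw :: "nat \<Rightarrow> real \<Rightarrow> (nat \<Rightarrow> real) \<Rightarrow> nat option pmf" where
  "reset_draw n \<rho> p = embed_pmf (\<lambda>x. case x of None \<Rightarrow> \<rho>
                                   | Some i \<Rightarrow> (if i \<in> {1..n} then p i else 0))"

primrec reset_coll :: "nat option stream \<Rightarrow> nat \<Rightarrow> nat set" where
  "reset_coll \<omega> 0 = {}"
| "reset_coll \<omega> (Suc t) = (case \<omega> !! t of None \<Rightarrow> {} | Some i \<Rightarrow> insert i (reset_coll \<omega> t))"

definition reset_time :: "nat \<Rightarrow> nat option stream \<Rightarrow> enat" where
  "reset_time n \<omega> = (if \<exists>t. {1..n} \<subseteq> reset_coll \<omega> t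
                      then enat (LEAST t. {1..n} \<subseteq> reset_coll \<omega> t) else \<infinity>)"

definition coll_draw :: "nat \<Rightarrow> real \<Rightarrow> (nat \<Rightarrow> real) \<Rightarrow> nat pmf" where
  "coll_draw n q p = embed_pmf (\<lambda>i. if i \<in> {1..n} then p i / q else 0)"

definition coll_time :: "nat \<Rightarrow> nat stream \<Rightarrow> enat" where
  "coll_time n \<omega> = (if \<exists>t. {1..n} \<subseteq> {\<omega> !! k | k. k < t}
                     then enat (LEAST t. {1..n} \<subseteq> {\<omega> !! k | k. k < t}) else \<infinity>)"

text \<open>z^C for an extended natural C, with z^infinity := 0 (used only for 0 <= z < 1).\<close>
definition pow_enat :: "real \<Rightarrow> enat \<Rightarrow> real" where
  "pow_enat z C = (case C of enat k \<Rightarrow> z ^ k | \<infinity> \<Rightarrow> 0)"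

end

theory Submission
  imports Defs "HOL-Probability.Stream_Space"
begin

definition ft :: "(nat \<Rightarrow> bool) \<Rightarrow> enat" where
  "ft P = (if \<exists>t. P t then enat (LEAST t. P t) else \<infinity>)"

lemma ft_0: "P 0 \<Longrightarrow> ft P = 0"
  by (auto simp: ft_def zero_enat_def intro!: Least_equality)

lemma ft_Suc: "\<not> P 0 \<Longrightarrow> ft P = eSuc (ft (\<lambda>t. P (Suc t)))"
proof (cases "\<exists>t. P t")
  case True
  then obtain t where t: "P t" by blast
  assume "\<not> P 0"
  then obtain u where "t = Suc u" using t by (cases t) auto
  with t have "\<exists>u. P (Suc u)" by blast
  then show ?thesis using True t \<open>\<not> P 0\<close> by (simp add: ft_def eSuc_enat Least_Suc[of P t])
next
  case False
  then show ?thesis by (simp add: ft_def)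
qed

fun stp :: "nat set \<Rightarrow> nat option \<Rightarrow> nat set" where
  "stp S None = {}" | "stp S (Some i) = insert i S"

definition RT :: "nat \<Rightarrow> nat set \<Rightarrow> nat option stream \<Rightarrow> enat" where
  "RT n S \<omega> = ft (\<lambda>t. {1..n} \<subseteq> foldl stp S (stake t \<omega>))"

definition CT :: "nat \<Rightarrow> nat set \<Rightarrow> nat stream \<Rightarrow> enat" where
  "CT n S \<omega> = ft (\<lambda>t. {1..n} \<subseteq> S \<union> set (stake t \<omega>))"

lemma reset_coll_eq: "reset_coll \<omega> t = foldl stp {} (stake t \<omega>)"
  by (induction t) (auto simp del: stake.simps(2) simp: stake_Suc split: option.split)

lemma reset_time_eq: "reset_time n \<omega> = RT n {} \<omega>"
  by (simp add: reset_time_def RT_def ft_def reset_coll_eq)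

lemma set_stake_eq: "set (stake t \<omega>) = {\<omega> !! k | k. k < t}"
  by (induction t) (auto simp del: stake.simps(2) simp: stake_Suc less_Suc_eq)

lemma coll_time_eq: "coll_time n \<omega> = CT n {} \<omega>"
  by (simp add: coll_time_def CT_def ft_def set_stake_eq)

lemma RT_full: "{1..n} \<subseteq> S \<Longrightarrow> RT n S \<omega> = 0"
  by (simp add: RT_def ft_0)

lemma RT_step: "\<not> {1..n} \<subseteq> S \<Longrightarrow> RT n S (y ## \<omega>) = eSuc (RT n (stp S y) \<omega>)"
  unfolding RT_def by (subst ft_Suc) simp_all

lemma CT_full: "{1..n} \<subseteq> S \<Longrightarrow> CT n S \<omega> = 0"
  by (simp add: CT_def ft_0)

lemma CT_step: "\<not> {1..n} \<subseteq> S \<Longrightarrow> CT n S (y ## \<omega>) = eSuc (CT n (insert y S) \<omega>)"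
  unfolding CT_def by (subst ft_Suc) simp_all

lemma meas_stake_fun:
  fixes f :: "'a::countable list \<Rightarrow> 'b"
  shows "(\<lambda>\<omega>. f (stake t \<omega>)) \<in> measurable (stream_space (count_space UNIV)) (count_space UNIV)"
  using measurable_compose[OF measurable_stake, of f "count_space UNIV" t] by simp

lemma meas_ft:
  assumes "\<And>t. (\<lambda>\<omega>. P \<omega> t) \<in> measurable (stream_space (count_space (UNIV::'a::countable set))) (count_space UNIV)"
  shows "(\<lambda>\<omega>. ft (P \<omega>)) \<in> measurable (stream_space (count_space (UNIV::'a set))) (count_space UNIV)"
proof -
  have [measurable]: "\<And>t. Measurable.pred (stream_space (count_space (UNIV::'a set))) (\<lambda>\<omega>. P \<omega> t)"
    using assms by simp
  have [measurable]: "(\<lambda>\<omega>. LEAST t. P \<omega> t) \<in> measurable (stream_space (count_space (UNIV::'a set))) (count_space UNIV)"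
    by measurable
  show ?thesis unfolding ft_def
    by measurable
qed

lemma meas_RT: "(\<lambda>\<omega>. RT n S \<omega>) \<in> measurable (stream_space (count_space UNIV)) (count_space UNIV)"
  unfolding RT_def by (rule meas_ft) (rule meas_stake_fun)

lemma meas_CT: "(\<lambda>\<omega>. CT n S \<omega>) \<in> measurable (stream_space (count_space UNIV)) (count_space UNIV)"
  unfolding CT_def by (rule meas_ft) (rule meas_stake_fun)

lemma meas_transfer:
  assumes "h \<in> measurable (stream_space (count_space UNIV)) (count_space UNIV)" "space N = UNIV"
  shows "(\<lambda>\<omega>. g (h \<omega>)) \<in> measurable (stream_space (measure_pmf D)) N"
proof -
  have "sets (stream_space (measure_pmf D)) = sets (stream_space (count_space UNIV))"
    by (rule sets_stream_space_cong) simp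
  then have "h \<in> measurable (stream_space (measure_pmf D)) (count_space UNIV)"
    using assms measurable_cong_sets by blast
  then show ?thesis using assms(2) measurable_compose[of h _ "count_space UNIV" g N] by simp
qed


lemma nn_count_fin:
  fixes f :: "'a \<Rightarrow> real"
  assumes "finite A" "\<And>x. x \<notin> A \<Longrightarrow> f x = 0"
  shows "(\<integral>\<^sup>+x. ennreal (f x) \<partial>count_space UNIV) = (\<Sum>x\<in>A. ennreal (f x))"
proof -
  have "(\<integral>\<^sup>+x. ennreal (f x) \<partial>count_space UNIV) = (\<integral>\<^sup>+x. ennreal (f x) * indicator A x \<partial>count_space UNIV)"
    using assms(2) by (intro nn_integral_cong) (auto split: split_indicator)
  also have "\<dots> = (\<integral>\<^sup>+x. ennreal (f x) \<partial>count_space A)"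
    by (simp add: nn_integral_count_space_indicator)
  also have "\<dots> = (\<Sum>x\<in>A. ennreal (f x))"
    using assms(1) by (rule nn_integral_count_space_finite)
  finally show ?thesis .
qed

lemma nn_pmf_fin:
  fixes F :: "'a \<Rightarrow> ennreal"
  assumes "finite A" "\<And>x. x \<notin> A \<Longrightarrow> pmf M x = 0"
  shows "(\<integral>\<^sup>+x. F x \<partial>measure_pmf M) = (\<Sum>x\<in>A. F x * pmf M x)"
  using assms by (intro nn_integral_measure_pmf_support) (auto simp: set_pmf_iff)

locale rbc =
  fixes n :: nat and \<rho> :: real and p :: "nat \<Rightarrow> real"
  assumes n1: "n \<ge> 1" and rho0: "0 < \<rho>" and rho1: "\<rho> < 1"
    and ppos: "\<And>i. i \<in> {1..n} \<Longrightarrow> p i > 0"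
    and psum: "(\<Sum>i\<in>{1..n}. p i) = 1 - \<rho>"
begin

definition D where "D = reset_draw n \<rho> p"
definition E where "E = coll_draw n (1 - \<rho>) p"

lemma pmf_D: "pmf D x = (case x of None \<Rightarrow> \<rho> | Some i \<Rightarrow> (if i \<in> {1..n} then p i else 0))"
proof -
  let ?f = "\<lambda>x. case x of None \<Rightarrow> \<rho> | Some i \<Rightarrow> (if i \<in> {1..n} then p i else 0)"
  have nn: "\<And>x. 0 \<le> ?f x" using rho0 ppos by (auto split: option.split simp: less_imp_le)
  have "(\<integral>\<^sup>+x. ennreal (?f x) \<partial>count_space UNIV) = (\<Sum>x\<in>insert None (Some ` {1..n}). ennreal (?f x))"
    by (rule nn_count_fin) (auto split: option.split)
  also have "\<dots> = ennreal (\<Sum>x\<in>insert None (Some ` {1..n}). ?f x)"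
    using nn by (simp del: sum.insert)
  also have "(\<Sum>x\<in>insert None (Some ` {1..n}). ?f x) = \<rho> + (\<Sum>i\<in>{1..n}. p i)"
    by (subst sum.insert) (auto simp: sum.reindex)
  finally have "(\<integral>\<^sup>+x. ennreal (?f x) \<partial>count_space UNIV) = 1" using psum by simp
  then show ?thesis unfolding D_def reset_draw_def by (rule pmf_embed_pmf[OF nn])
qed

lemma pmf_E: "pmf E i = (if i \<in> {1..n} then p i / (1 - \<rho>) else 0)"
proof -
  let ?f = "\<lambda>i. if i \<in> {1..n} then p i / (1 - \<rho>) else 0"
  have nn: "\<And>x. 0 \<le> ?f x" using rho1 ppos by (auto simp: less_imp_le)
  have "(\<integral>\<^sup>+x. ennreal (?f x) \<partial>count_space UNIV) = (\<Sum>x\<in>{1..n}. ennreal (?f x))"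
    by (rule nn_count_fin) auto
  also have "\<dots> = ennreal (\<Sum>x\<in>{1..n}. ?f x)"
    by (rule sum_ennreal, rule nn)
  also have "(\<Sum>x\<in>{1..n}. ?f x) = (\<Sum>i\<in>{1..n}. p i) / (1 - \<rho>)"
    by (simp add: sum_divide_distrib)
  finally have "(\<integral>\<^sup>+x. ennreal (?f x) \<partial>count_space UNIV) = 1" using psum rho1 by simp
  then show ?thesis unfolding E_def coll_draw_def by (rule pmf_embed_pmf[OF nn])
qed

lemma int_D: "(\<integral>\<^sup>+y. F y \<partial>measure_pmf D) = ennreal \<rho> * F None + (\<Sum>i\<in>{1..n}. ennreal (p i) * F (Some i))"
proof -
  have "(\<integral>\<^sup>+y. F y \<partial>measure_pmf D) = (\<Sum>x\<in>insert None (Some ` {1..n}). F x * pmf D x)"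
    by (rule nn_pmf_fin) (auto simp: pmf_D split: option.split)
  also have "\<dots> = ennreal \<rho> * F None + (\<Sum>i\<in>{1..n}. ennreal (p i) * F (Some i))"
    by (subst sum.insert) (auto simp: sum.reindex pmf_D mult.commute)
  finally show ?thesis .
qed

lemma int_E: "(\<integral>\<^sup>+y. F y \<partial>measure_pmf E) = (\<Sum>i\<in>{1..n}. ennreal (p i / (1 - \<rho>)) * F i)"
proof -
  have "(\<integral>\<^sup>+y. F y \<partial>measure_pmf E) = (\<Sum>x\<in>{1..n}. F x * pmf E x)"
    by (rule nn_pmf_fin) (auto simp: pmf_E)
  also have "\<dots> = (\<Sum>i\<in>{1..n}. ennreal (p i / (1 - \<rho>)) * F i)"
    by (auto simp: pmf_E mult.commute intro!: sum.cong)
  finally show ?thesis .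
qed


lemma eSuc_min: "min (eSuc a) (eSuc b) = eSuc (min a b)"
  by (simp add: min_def eSuc_ile_mono)

lemma pow_enat_eSuc: "pow_enat z (eSuc c) = z * pow_enat z c"
  by (cases c) (simp_all add: pow_enat_def eSuc_enat)

lemma pow_enat_bounds: "0 \<le> z \<Longrightarrow> z \<le> 1 \<Longrightarrow> 0 \<le> pow_enat z c \<and> pow_enat z c \<le> 1"
  by (cases c) (simp_all add: pow_enat_def power_le_one)

definition X :: "enat \<Rightarrow> nat set \<Rightarrow> ennreal" where
  "X m S = (\<integral>\<^sup>+\<omega>. ennreal_of_enat (min (RT n S \<omega>) m) \<partial>stream_space (measure_pmf D))"

definition G :: "nat set \<Rightarrow> ennreal" where
  "G S = (\<integral>\<^sup>+\<omega>. ennreal (pow_enat (1 - \<rho>) (CT n S \<omega>)) \<partial>stream_space (measure_pmf E))"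

lemma meas_X: "(\<lambda>\<omega>. ennreal_of_enat (min (RT n S \<omega>) m)) \<in> borel_measurable (stream_space (measure_pmf D))"
  by (rule meas_transfer[OF meas_RT]) simp

lemma meas_G: "(\<lambda>\<omega>. ennreal (pow_enat (1 - \<rho>) (CT n S \<omega>))) \<in> borel_measurable (stream_space (measure_pmf E))"
  by (rule meas_transfer[OF meas_CT]) simp

lemma X_full: "{1..n} \<subseteq> S \<Longrightarrow> X m S = 0"
  by (simp add: X_def RT_full)

lemma X_step:
  assumes "\<not> {1..n} \<subseteq> S"
  shows "X (eSuc m) S = 1 + ennreal \<rho> * X m {} + (\<Sum>i\<in>{1..n}. ennreal (p i) * X m (insert i S))"
proof -
  interpret S: prob_space "stream_space (measure_pmf D)" by (rule prob_space.prob_space_stream_space[OF prob_space_measure_pmf])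
  have "X (eSuc m) S = (\<integral>\<^sup>+y. \<integral>\<^sup>+\<omega>. ennreal_of_enat (min (RT n S (y ## \<omega>)) (eSuc m)) \<partial>stream_space (measure_pmf D) \<partial>measure_pmf D)"
    unfolding X_def by (rule prob_space.nn_integral_stream_space[OF prob_space_measure_pmf]) (rule meas_X)
  also have "\<dots> = (\<integral>\<^sup>+y. \<integral>\<^sup>+\<omega>. 1 + ennreal_of_enat (min (RT n (stp S y) \<omega>) m) \<partial>stream_space (measure_pmf D) \<partial>measure_pmf D)"
    using assms by (simp add: RT_step eSuc_min)
  also have "\<dots> = (\<integral>\<^sup>+y. 1 + X m (stp S y) \<partial>measure_pmf D)"
    by (subst nn_integral_add) (simp_all add: meas_X X_def S.emeasure_space_1)
  also have "\<dots> = 1 + (\<integral>\<^sup>+y. X m (stp S y) \<partial>measure_pmf D)"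
    by (subst nn_integral_add) (simp_all add: measure_pmf.emeasure_space_1)
  also have "\<dots> = 1 + ennreal \<rho> * X m {} + (\<Sum>i\<in>{1..n}. ennreal (p i) * X m (insert i S))"
    by (simp add: int_D add.assoc)
  finally show ?thesis .
qed

lemma G_full: "{1..n} \<subseteq> S \<Longrightarrow> G S = 1"
proof -
  interpret S: prob_space "stream_space (measure_pmf E)" by (rule prob_space.prob_space_stream_space[OF prob_space_measure_pmf])
  assume "{1..n} \<subseteq> S"
  then show ?thesis by (simp add: G_def CT_full pow_enat_def zero_enat_def S.emeasure_space_1)
qed

lemma G_le1: "G S \<le> 1"
proof -
  interpret S: prob_space "stream_space (measure_pmf E)" by (rule prob_space.prob_space_stream_space[OF prob_space_measure_pmf])
  have "G S \<le> (\<integral>\<^sup>+\<omega>. 1 \<partial>stream_space (measure_pmf E))"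
    unfolding G_def using pow_enat_bounds[of "1 - \<rho>"] rho0 rho1 by (intro nn_integral_mono) auto
  then show ?thesis by (simp add: S.emeasure_space_1)
qed

lemma G_step:
  assumes "\<not> {1..n} \<subseteq> S"
  shows "G S = (\<Sum>i\<in>{1..n}. ennreal (p i) * G (insert i S))"
proof -
  have q0: "0 \<le> 1 - \<rho>" using rho1 by simp
  have "G S = (\<integral>\<^sup>+y. \<integral>\<^sup>+\<omega>. ennreal (pow_enat (1 - \<rho>) (CT n S (y ## \<omega>))) \<partial>stream_space (measure_pmf E) \<partial>measure_pmf E)"
    unfolding G_def by (rule prob_space.nn_integral_stream_space[OF prob_space_measure_pmf]) (rule meas_G)
  also have "\<dots> = (\<integral>\<^sup>+y. \<integral>\<^sup>+\<omega>. ennreal (1 - \<rho>) * ennreal (pow_enat (1 - \<rho>) (CT n (insert y S) \<omega>)) \<partial>stream_space (measure_pmf E) \<partial>measure_pmf E)"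
    using assms q0 pow_enat_bounds[of "1 - \<rho>"] rho0 by (simp add: CT_step pow_enat_eSuc ennreal_mult)
  also have "\<dots> = (\<integral>\<^sup>+y. ennreal (1 - \<rho>) * G (insert y S) \<partial>measure_pmf E)"
    by (subst nn_integral_cmult) (simp_all add: meas_G G_def)
  also have "\<dots> = (\<Sum>i\<in>{1..n}. ennreal (p i / (1 - \<rho>)) * (ennreal (1 - \<rho>) * G (insert i S)))"
    by (rule int_E)
  also have "\<dots> = (\<Sum>i\<in>{1..n}. ennreal (p i) * G (insert i S))"
  proof (rule sum.cong)
    fix i assume "i \<in> {1..n}"
    then have "ennreal (p i / (1 - \<rho>)) * ennreal (1 - \<rho>) = ennreal (p i)"
      using ppos[of i] rho1 by (simp add: ennreal_mult[symmetric] less_imp_le)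
    then show "ennreal (p i / (1 - \<rho>)) * (ennreal (1 - \<rho>) * G (insert i S)) = ennreal (p i) * G (insert i S)"
      by (simp add: mult.assoc[symmetric])
  qed simp
  finally show ?thesis .
qed


definition g :: "nat set \<Rightarrow> real" where "g S = enn2real (G S)"

lemma G_eq: "G S = ennreal (g S)"
proof -
  have "G S < top" using G_le1[of S] ennreal_one_less_top by (rule le_less_trans)
  then show ?thesis unfolding g_def by simp
qed

lemma g_nonneg: "0 \<le> g S" by (simp add: g_def)

lemma g_le1: "g S \<le> 1"
  using G_le1[of S] unfolding G_eq by simp

lemma g_full: "{1..n} \<subseteq> S \<Longrightarrow> g S = 1"
  by (simp add: g_def G_full)

lemma conv:
  assumes "\<And>T. 0 \<le> f T"
  shows "(\<Sum>i\<in>{1..n}. ennreal (p i) * ennreal (f (insert i S))) = ennreal (\<Sum>i\<in>{1..n}. p i * f (insert i S))"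
proof -
  have "(\<Sum>i\<in>{1..n}. ennreal (p i) * ennreal (f (insert i S))) = (\<Sum>i\<in>{1..n}. ennreal (p i * f (insert i S)))"
  proof (rule sum.cong[OF refl])
    fix i assume "i \<in> {1..n}"
    then have "0 \<le> p i" using ppos[of i] by simp
    then show "ennreal (p i) * ennreal (f (insert i S)) = ennreal (p i * f (insert i S))"
      using assms by (intro ennreal_mult[symmetric])
  qed
  also have "\<dots> = ennreal (\<Sum>i\<in>{1..n}. p i * f (insert i S))"
  proof (rule sum_ennreal)
    fix i assume "i \<in> {1..n}"
    then have "0 \<le> p i" using ppos[of i] by simp
    then show "0 \<le> p i * f (insert i S)" using assms by (intro mult_nonneg_nonneg)
  qed
  finally show ?thesis .
qed

lemma sum_pf_nonneg: "(\<And>T. 0 \<le> f T) \<Longrightarrow> 0 \<le> (\<Sum>i\<in>{1..n}. p i * f (insert i S))"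
proof (rule sum_nonneg)
  fix i assume "\<And>T. 0 \<le> f T" "i \<in> {1..n}"
  then show "0 \<le> p i * f (insert i S)" using ppos[of i] by (intro mult_nonneg_nonneg) auto
qed

lemma g_step:
  assumes F: "\<not> {1..n} \<subseteq> S"
  shows "g S = (\<Sum>i\<in>{1..n}. p i * g (insert i S))"
proof -
  have "ennreal (g S) = (\<Sum>i\<in>{1..n}. ennreal (p i) * ennreal (g (insert i S)))"
    using G_step[OF F] unfolding G_eq .
  also have "\<dots> = ennreal (\<Sum>i\<in>{1..n}. p i * g (insert i S))"
    by (rule conv) (rule g_nonneg)
  finally have "ennreal (g S) = ennreal (\<Sum>i\<in>{1..n}. p i * g (insert i S))" .
  then show ?thesis
    using ennreal_inj[OF g_nonneg[of S] sum_pf_nonneg[of g S, OF g_nonneg]] by blast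
qed

lemma down_induct[consumes 1, case_names step]:
  assumes "S \<subseteq> {1..n}"
    and "\<And>S. S \<subseteq> {1..n} \<Longrightarrow> (\<And>i. i \<in> {1..n} \<Longrightarrow> i \<notin> S \<Longrightarrow> P (insert i S)) \<Longrightarrow> P S"
  shows "P S"
  using assms(1)
proof (induction "card ({1..n} - S)" arbitrary: S rule: less_induct)
  case less
  show ?case
  proof (rule assms(2)[OF less.prems])
    fix i assume i: "i \<in> {1..n}" "i \<notin> S"
    have "{1..n} - insert i S \<subset> {1..n} - S" using i by blast
    then have "card ({1..n} - insert i S) < card ({1..n} - S)"
      by (intro psubset_card_mono) simp_all
    moreover have "insert i S \<subseteq> {1..n}" using i less.prems by blast
    ultimately show "P (insert i S)" by (rule less.hyps)
  qed
qed

lemma g_pos: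
  assumes "S \<subseteq> {1..n}" shows "0 < g S"
  using assms
proof (induction S rule: down_induct)
  case (step S)
  show ?case
  proof (cases "{1..n} \<subseteq> S")
    case True then show ?thesis by (simp add: g_full)
  next
    case False
    then obtain i where i: "i \<in> {1..n}" "i \<notin> S" by blast
    have "0 < (\<Sum>i\<in>{1..n}. p i * g (insert i S))"
    proof (rule sum_pos2[OF _ i(1)])
      have "0 < g (insert i S)" using step(2)[OF i] .
      then show "0 < p i * g (insert i S)" using ppos[OF i(1)] by simp
      fix j assume "j \<in> {1..n}"
      then show "0 \<le> p j * g (insert j S)" using ppos[of j] g_nonneg[of "insert j S"] by simp
    qed simp
    then show ?thesis using g_step[OF False] by simp
  qed
qed

definition s0 where "s0 = g {}"

lemma s0_pos: "0 < s0" unfolding s0_def by (rule g_pos) simp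

definition y :: "nat set \<Rightarrow> real" where "y S = (1 - g S) / (\<rho> * s0)"

lemma y_nonneg: "0 \<le> y T"
  using g_le1[of T] s0_pos rho0 by (simp add: y_def)

lemma y_full: "{1..n} \<subseteq> S \<Longrightarrow> y S = 0"
  by (simp add: y_def g_full)

lemma y_step:
  assumes "\<not> {1..n} \<subseteq> S"
  shows "y S = 1 + \<rho> * y {} + (\<Sum>i\<in>{1..n}. p i * y (insert i S))"
proof -
  have "(\<Sum>i\<in>{1..n}. p i * y (insert i S)) = ((\<Sum>i\<in>{1..n}. p i) - (\<Sum>i\<in>{1..n}. p i * g (insert i S))) / (\<rho> * s0)"
    by (simp add: y_def sum_divide_distrib[symmetric] sum_subtractf right_diff_distrib)
  also have "\<dots> = (1 - \<rho> - g S) / (\<rho> * s0)"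
    using psum g_step[OF assms] by simp
  finally have eq: "(\<Sum>i\<in>{1..n}. p i * y (insert i S)) = (1 - \<rho> - g S) / (\<rho> * s0)" .
  have e2: "\<rho> * y {} = (1 - s0) / s0" using rho0 by (simp add: y_def s0_def[symmetric])
  have h: "1 + (1 - s0) / s0 + (1 - \<rho> - g S) / (\<rho> * s0) = (1 - g S) / (\<rho> * s0)"
    using rho0 s0_pos by (simp add: field_simps)
  show ?thesis unfolding eq e2 h by (rule y_def)
qed

lemma X_le: "S \<subseteq> {1..n} \<Longrightarrow> X (enat m) S \<le> ennreal (y S)"
proof (induction m arbitrary: S)
  case 0
  then show ?case by (simp add: X_def zero_enat_def[symmetric])
next
  case (Suc m)
  show ?case
  proof (cases "{1..n} \<subseteq> S")
    case True then show ?thesis by (simp add: X_full)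
  next
    case False
    have "X (enat (Suc m)) S = 1 + ennreal \<rho> * X (enat m) {} + (\<Sum>i\<in>{1..n}. ennreal (p i) * X (enat m) (insert i S))"
      using X_step[OF False, of "enat m"] by (simp add: eSuc_enat)
    also have "\<dots> \<le> 1 + ennreal \<rho> * ennreal (y {}) + (\<Sum>i\<in>{1..n}. ennreal (p i) * ennreal (y (insert i S)))"
      using Suc.IH Suc.prems
      by (intro add_mono mult_left_mono sum_mono order_refl) auto
    also have "\<dots> = ennreal (1 + \<rho> * y {} + (\<Sum>i\<in>{1..n}. p i * y (insert i S)))"
    proof -
      have a: "0 \<le> \<rho> * y {}" using rho0 y_nonneg[of "{}"] by simp
      have b: "0 \<le> (\<Sum>i\<in>{1..n}. p i * y (insert i S))" by (rule sum_pf_nonneg) (rule y_nonneg)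
      have "ennreal (1 + \<rho> * y {} + (\<Sum>i\<in>{1..n}. p i * y (insert i S)))
          = ennreal (1 + \<rho> * y {}) + ennreal (\<Sum>i\<in>{1..n}. p i * y (insert i S))"
        using a b by (intro ennreal_plus) simp_all
      also have "ennreal (1 + \<rho> * y {}) = 1 + ennreal (\<rho> * y {})"
        using a by (subst ennreal_plus) simp_all
      also have "ennreal (\<rho> * y {}) = ennreal \<rho> * ennreal (y {})"
        using rho0 y_nonneg[of "{}"] by (intro ennreal_mult) simp_all
      also have "ennreal (\<Sum>i\<in>{1..n}. p i * y (insert i S)) = (\<Sum>i\<in>{1..n}. ennreal (p i) * ennreal (y (insert i S)))"
        by (rule conv[symmetric]) (rule y_nonneg)
      finally show ?thesis by simp
    qed
    also have "\<dots> = ennreal (y S)" using y_step[OF False] by simp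
    finally show ?thesis .
  qed
qed

lemma SUP_min_enat: "(SUP m. ennreal_of_enat (min e (enat m))) = ennreal_of_enat e"
proof (cases e)
  case (enat k)
  show ?thesis
  proof (rule antisym)
    show "(SUP m. ennreal_of_enat (min e (enat m))) \<le> ennreal_of_enat e"
      by (rule SUP_least) (simp add: ennreal_of_enat_le_iff)
    show "ennreal_of_enat e \<le> (SUP m. ennreal_of_enat (min e (enat m)))"
      by (rule SUP_upper2[of k]) (auto simp: enat)
  qed
next
  case infinity
  then show ?thesis by (simp add: ennreal_SUP_of_nat_eq_top)
qed

lemma X_inf: "X \<infinity> S = (SUP m. X (enat m) S)"
proof -
  have "X \<infinity> S = (\<integral>\<^sup>+\<omega>. (SUP m. ennreal_of_enat (min (RT n S \<omega>) (enat m))) \<partial>stream_space (measure_pmf D))"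
    by (simp add: X_def SUP_min_enat)
  also have "\<dots> = (SUP m. X (enat m) S)"
    unfolding X_def
  proof (rule nn_integral_monotone_convergence_SUP)
    show "incseq (\<lambda>m \<omega>. ennreal_of_enat (min (RT n S \<omega>) (enat m)))"
      by (auto simp: incseq_def le_fun_def ennreal_of_enat_le_iff min_le_iff_disj)
  qed (rule meas_X)
  finally show ?thesis .
qed


lemma conv2:
  assumes "\<And>T. 0 \<le> f T"
  shows "1 + ennreal \<rho> * ennreal (f {}) + (\<Sum>i\<in>{1..n}. ennreal (p i) * ennreal (f (insert i S)))
       = ennreal (1 + \<rho> * f {} + (\<Sum>i\<in>{1..n}. p i * f (insert i S)))"
proof -
  have a: "0 \<le> \<rho> * f {}" using rho0 assms[of "{}"] by simp
  have b: "0 \<le> (\<Sum>i\<in>{1..n}. p i * f (insert i S))" by (rule sum_pf_nonneg) (rule assms)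
  have "ennreal (1 + \<rho> * f {} + (\<Sum>i\<in>{1..n}. p i * f (insert i S)))
      = ennreal (1 + \<rho> * f {}) + ennreal (\<Sum>i\<in>{1..n}. p i * f (insert i S))"
    using a b by (intro ennreal_plus) simp_all
  also have "ennreal (1 + \<rho> * f {}) = 1 + ennreal (\<rho> * f {})"
    using a by (subst ennreal_plus) simp_all
  also have "ennreal (\<rho> * f {}) = ennreal \<rho> * ennreal (f {})"
    using rho0 assms[of "{}"] by (intro ennreal_mult) simp_all
  also have "ennreal (\<Sum>i\<in>{1..n}. p i * f (insert i S)) = (\<Sum>i\<in>{1..n}. ennreal (p i) * ennreal (f (insert i S)))"
    by (rule conv[symmetric]) (rule assms)
  finally show ?thesis by simp
qed

lemma X_inf_le: "S \<subseteq> {1..n} \<Longrightarrow> X \<infinity> S \<le> ennreal (y S)"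
  unfolding X_inf by (rule SUP_least) (rule X_le)

definition r :: "nat set \<Rightarrow> real" where "r S = enn2real (X \<infinity> S)"

lemma r_nonneg: "0 \<le> r S" by (simp add: r_def)

lemma X_r: assumes "S \<subseteq> {1..n}" shows "X \<infinity> S = ennreal (r S)"
proof -
  have "X \<infinity> S < top" using X_inf_le[OF assms] by (rule le_less_trans) simp
  then show ?thesis unfolding r_def by simp
qed

lemma r_full: "{1..n} \<subseteq> S \<Longrightarrow> r S = 0"
  by (simp add: r_def X_full)

lemma r_step:
  assumes S: "S \<subseteq> {1..n}" and F: "\<not> {1..n} \<subseteq> S"
  shows "r S = 1 + \<rho> * r {} + (\<Sum>i\<in>{1..n}. p i * r (insert i S))"
proof -
  have "X \<infinity> S = 1 + ennreal \<rho> * X \<infinity> {} + (\<Sum>i\<in>{1..n}. ennreal (p i) * X \<infinity> (insert i S))"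
    using X_step[OF F, of \<infinity>] by simp
  also have "(\<Sum>i\<in>{1..n}. ennreal (p i) * X \<infinity> (insert i S)) = (\<Sum>i\<in>{1..n}. ennreal (p i) * ennreal (r (insert i S)))"
    using S by (intro sum.cong refl) (simp add: X_r)
  also have "X \<infinity> {} = ennreal (r {})" by (simp add: X_r)
  also have "1 + ennreal \<rho> * ennreal (r {}) + (\<Sum>i\<in>{1..n}. ennreal (p i) * ennreal (r (insert i S)))
      = ennreal (1 + \<rho> * r {} + (\<Sum>i\<in>{1..n}. p i * r (insert i S)))"
    by (rule conv2) (rule r_nonneg)
  finally have "ennreal (r S) = ennreal (1 + \<rho> * r {} + (\<Sum>i\<in>{1..n}. p i * r (insert i S)))"
    using X_r[OF S] by simp
  then show ?thesis
    using ennreal_inj[OF r_nonneg[of S], of "1 + \<rho> * r {} + (\<Sum>i\<in>{1..n}. p i * r (insert i S))"]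
      rho0 r_nonneg[of "{}"] sum_pf_nonneg[of r S, OF r_nonneg] by simp
qed

definition d :: "nat set \<Rightarrow> real" where "d S = r S - y S"

lemma d_full: "{1..n} \<subseteq> S \<Longrightarrow> d S = 0"
  by (simp add: d_def r_full y_full)

lemma d_step:
  assumes S: "S \<subseteq> {1..n}" and F: "\<not> {1..n} \<subseteq> S"
  shows "d S = \<rho> * d {} + (\<Sum>i\<in>{1..n}. p i * d (insert i S))"
proof -
  have "(\<Sum>i\<in>{1..n}. p i * d (insert i S)) = (\<Sum>i\<in>{1..n}. p i * r (insert i S)) - (\<Sum>i\<in>{1..n}. p i * y (insert i S))"
    by (simp add: d_def right_diff_distrib sum_subtractf)
  then show ?thesis using r_step[OF S F] y_step[OF F]
    by (simp add: d_def right_diff_distrib)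
qed

definition e :: "nat set \<Rightarrow> real" where "e S = d S - (1 - g S) * d {}"

lemma e_zero:
  assumes "S \<subseteq> {1..n}" shows "e S = 0"
  using assms
proof (induction S rule: down_induct)
  case (step S)
  show ?case
  proof (cases "{1..n} \<subseteq> S")
    case True then show ?thesis by (simp add: e_def d_full g_full)
  next
    case False
    have "(\<Sum>i\<in>{1..n}. p i * e (insert i S))
        = (\<Sum>i\<in>{1..n}. p i * d (insert i S) - p i * d {} + p i * g (insert i S) * d {})"
      by (rule sum.cong) (simp_all add: e_def algebra_simps)
    also have "\<dots> = (\<Sum>i\<in>{1..n}. p i * d (insert i S)) - (\<Sum>i\<in>{1..n}. p i) * d {}
                   + (\<Sum>i\<in>{1..n}. p i * g (insert i S)) * d {}"
      by (simp add: sum.distrib sum_subtractf sum_distrib_right)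
    also have "\<dots> = (\<Sum>i\<in>{1..n}. p i * d (insert i S)) - (1 - \<rho>) * d {} + g S * d {}"
      using psum by (simp add: g_step[OF False])
    finally have s1: "(\<Sum>i\<in>{1..n}. p i * e (insert i S)) = (\<Sum>i\<in>{1..n}. p i * d (insert i S)) - (1 - \<rho>) * d {} + g S * d {}" .
    have es: "e S = (\<Sum>i\<in>{1..n}. p i * e (insert i S))"
      unfolding s1 using d_step[OF step(1) False] by (simp add: e_def algebra_simps)
    have "(\<Sum>i\<in>{1..n}. p i * e (insert i S)) = (\<Sum>i\<in>{1..n} - S. p i * e (insert i S)) + (\<Sum>i\<in>S. p i * e (insert i S))"
      using step(1) by (intro sum.subset_diff) simp_all
    also have "(\<Sum>i\<in>{1..n} - S. p i * e (insert i S)) = 0"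
      using step(2) by (intro sum.neutral) simp
    also have "(\<Sum>i\<in>S. p i * e (insert i S)) = (\<Sum>i\<in>S. p i) * e S"
      by (simp add: sum_distrib_right insert_absorb)
    finally have eq: "e S = (\<Sum>i\<in>S. p i) * e S" using es by simp
    have "(\<Sum>i\<in>S. p i) \<le> (\<Sum>i\<in>{1..n}. p i)"
      using step(1) ppos by (intro sum_mono2) (auto intro: less_imp_le)
    then have "(\<Sum>i\<in>S. p i) < 1" using psum rho0 by simp
    then have "(1 - (\<Sum>i\<in>S. p i)) * e S = 0" and "1 - (\<Sum>i\<in>S. p i) \<noteq> 0"
      using eq by (simp_all add: algebra_simps)
    then show ?thesis by simp
  qed
qed

lemma d_empty: "d {} = 0"
proof -
  have F: "\<not> {1..n} \<subseteq> {}" using n1 by auto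
  have di: "d (insert i {}) = (1 - g (insert i {})) * d {}" if "i \<in> {1..n}" for i
    using e_zero[of "insert i {}"] that unfolding e_def by simp
  have "(\<Sum>i\<in>{1..n}. p i * d (insert i {})) = (\<Sum>i\<in>{1..n}. p i * d {} - p i * g (insert i {}) * d {})"
    by (rule sum.cong) (simp_all add: di algebra_simps)
  also have "\<dots> = (\<Sum>i\<in>{1..n}. p i) * d {} - (\<Sum>i\<in>{1..n}. p i * g (insert i {})) * d {}"
    by (simp add: sum_subtractf sum_distrib_right)
  also have "\<dots> = (1 - \<rho>) * d {} - s0 * d {}"
  proof -
    have gs: "(\<Sum>i\<in>{1..n}. p i * g (insert i {})) = s0" unfolding s0_def by (rule g_step[OF F, symmetric])
    show ?thesis unfolding gs psum ..
  qed
  finally have "d {} = \<rho> * d {} + ((1 - \<rho>) * d {} - s0 * d {})"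
    using d_step[OF _ F] by simp
  then have "s0 * d {} = 0" by (simp add: algebra_simps)
  then show ?thesis using s0_pos by simp
qed

lemma final_X: "(\<integral>\<^sup>+\<omega>. ennreal_of_enat (reset_time n \<omega>) \<partial>stream_space (measure_pmf (reset_draw n \<rho> p)))
   = ennreal ((1 - s0) / (\<rho> * s0))"
proof -
  have "(\<integral>\<^sup>+\<omega>. ennreal_of_enat (reset_time n \<omega>) \<partial>stream_space (measure_pmf (reset_draw n \<rho> p))) = X \<infinity> {}"
    by (simp add: X_def D_def reset_time_eq)
  also have "\<dots> = ennreal (r {})" by (simp add: X_r)
  also have "r {} = y {}" using d_empty by (simp add: d_def)
  also have "y {} = (1 - s0) / (\<rho> * s0)" by (simp add: y_def s0_def)
  finally show ?thesis .
qed

lemma s0_eq: "s0 = (\<integral>\<omega>. pow_enat (1 - \<rho>) (coll_time n \<omega>) \<partial>stream_space (measure_pmf (coll_draw n (1 - \<rho>) p)))"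
proof -
  have ct: "coll_time n = CT n {}" by (rule ext) (rule coll_time_eq)
  have "(\<integral>\<omega>. pow_enat (1 - \<rho>) (coll_time n \<omega>) \<partial>stream_space (measure_pmf E))
      = enn2real (\<integral>\<^sup>+\<omega>. ennreal (pow_enat (1 - \<rho>) (coll_time n \<omega>)) \<partial>stream_space (measure_pmf E))"
  proof (rule integral_eq_nn_integral)
    show "(\<lambda>\<omega>. pow_enat (1 - \<rho>) (coll_time n \<omega>)) \<in> borel_measurable (stream_space (measure_pmf E))"
      unfolding ct by (rule meas_transfer[OF meas_CT]) simp
    show "AE \<omega> in stream_space (measure_pmf E). 0 \<le> pow_enat (1 - \<rho>) (coll_time n \<omega>)"
      using pow_enat_bounds[of "1 - \<rho>"] rho0 rho1 by simp
  qed
  also have "\<dots> = s0" unfolding ct s0_def g_def G_def by simp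
  finally show ?thesis by (simp add: E_def)
qed

end

theorem mainTheorem18:
  fixes n :: nat and \<rho> :: real and p :: "nat \<Rightarrow> real"
  assumes "n \<ge> 1"
    and "0 < \<rho>" and "\<rho> < 1"
    and "\<And>i. i \<in> {1..n} \<Longrightarrow> p i > 0"
    and "(\<Sum>i\<in>{1..n}. p i) = 1 - \<rho>"
  defines "q \<equiv> 1 - \<rho>"
  defines "s \<equiv> (\<integral>\<omega>. pow_enat q (coll_time n \<omega>) \<partial>(stream_space (measure_pmf (coll_draw n q p))))"
  shows "(\<integral>\<^sup>+\<omega>. ennreal_of_enat (reset_time n \<omega>) \<partial>(stream_space (measure_pmf (reset_draw n \<rho> p))))
           = ennreal ((1 - s) / (\<rho> * s))"
proof -
  interpret rbc n \<rho> p using assms(1-5) by unfold_locales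
  have "s = s0" unfolding s_def q_def by (rule s0_eq[symmetric])
  then show ?thesis using final_X by simp
qed

end
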